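(* Let $\boldsymbol x^*$ be a pure Nash equilibrium of $\mathcal L(n,S)$ satisfying the vertex property, and let $[a,b]$ be an $\boldsymbol x^*$-half interval. Then $\lambda([a,b])\le\Lambda/n$, where $\Lambda=\lambda(S)$.
   Context: Network: $(V,E)$ is a finite connected graph with no vertex of degree $2$; each edge $e$ has a length $\lambda(e)>0$. $S$ is the metric measure space obtained by identifying each edge with a segment of length $\lambda(e)$, with length measure $\lambda$ and shortest-path distance $d$. A leaf is a vertex of degree $1$. Location game $\mathcal L(n,S)$: $n$ players each choose a point of $S$. Consumers are distributed according to $\lambda$, and each shops at a closest occupied location. Consumers equidistant from several closest occupied locations are split equally among those locations, and the share of a location is split equally among the players located there. Payoff is the mass of consumers attracted. Nash equilibria are pure. Vertex property: every vertex of degree $\ge3$ is occupied. For a profile $\boldsymbol x$ with the vertex property, a segment $[a,b]$ contained in an edge $e$ is an $\boldsymbol x$-half interval if one of the following holds (with the roles of $a$ and $b$ interchangeable): (i) $a=x_i$ for some player $i$, $b$ is a leaf endpoint of $e$, and no player is located in $(a,b]$; (ii) $a=x_i$ and $x_\ell\in e$ for players $i,\ell$, no player is located strictly between $a$ and $x_\ell$, and $b$ is the midpoint between $a$ and $x_\ell$. *)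

theory Defs
  imports "HOL-Analysis.Analysis"
begin

text \<open>A graph is given by a vertex set V and a set E of edges, each edge an
ordered pair (a,b) of distinct vertices (orientation is only used to
parametrise the edge: parameter 0 is a, parameter len e is b).\<close>

datatype 'v pt = Vtx 'v | Inn "'v \<times> 'v" real

definition deg :: "('v \<times> 'v) set \<Rightarrow> 'v \<Rightarrow> nat" where
  "deg E v = card {e \<in> E. fst e = v \<or> snd e = v}"

definition adjacent :: "('v \<times> 'v) set \<Rightarrow> 'v \<Rightarrow> 'v \<Rightarrow> bool" where
  "adjacent E u w \<longleftrightarrow> (u, w) \<in> E \<or> (w, u) \<in> E"

definition is_walk :: "('v \<times> 'v) set \<Rightarrow> 'v list \<Rightarrow> bool" where
  "is_walk E xs \<longleftrightarrow> xs \<noteq> [] \<and> (\<forall>k. Suc k < length xs \<longrightarrow> adjacent E (xs ! k) (xs ! Suc k))"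

definition connected_graph :: "'v set \<Rightarrow> ('v \<times> 'v) set \<Rightarrow> bool" where
  "connected_graph V E \<longleftrightarrow> V \<noteq> {} \<and>
     (\<forall>u\<in>V. \<forall>w\<in>V. \<exists>xs. is_walk E xs \<and> hd xs = u \<and> last xs = w)"

definition network :: "'v set \<Rightarrow> ('v \<times> 'v) set \<Rightarrow> ('v \<times> 'v \<Rightarrow> real) \<Rightarrow> bool" where
  "network V E len \<longleftrightarrow> finite V \<and> E \<subseteq> V \<times> V
     \<and> (\<forall>(a, b)\<in>E. a \<noteq> b \<and> (b, a) \<notin> E)
     \<and> connected_graph V E
     \<and> (\<forall>v\<in>V. deg E v \<noteq> 2)
     \<and> (\<forall>e\<in>E. len e > 0)"

definition elen :: "('v \<times> 'v) set \<Rightarrow> ('v \<times> 'v \<Rightarrow> real) \<Rightarrow> 'v \<Rightarrow> 'v \<Rightarrow> real" where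
  "elen E len u w = (if (u, w) \<in> E then len (u, w) else len (w, u))"

definition walk_len :: "('v \<times> 'v) set \<Rightarrow> ('v \<times> 'v \<Rightarrow> real) \<Rightarrow> 'v list \<Rightarrow> real" where
  "walk_len E len xs = (\<Sum>k<length xs - 1. elen E len (xs ! k) (xs ! Suc k))"

definition vdist :: "('v \<times> 'v) set \<Rightarrow> ('v \<times> 'v \<Rightarrow> real) \<Rightarrow> 'v \<Rightarrow> 'v \<Rightarrow> real" where
  "vdist E len u w = Inf {walk_len E len xs | xs. is_walk E xs \<and> hd xs = u \<and> last xs = w}"

definition Spts :: "'v set \<Rightarrow> ('v \<times> 'v) set \<Rightarrow> ('v \<times> 'v \<Rightarrow> real) \<Rightarrow> 'v pt set" where
  "Spts V E len = Vtx ` V \<union> {Inn e t | e t. e \<in> E \<and> 0 < t \<and> t < len e}"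

definition point :: "('v \<times> 'v \<Rightarrow> real) \<Rightarrow> 'v \<times> 'v \<Rightarrow> real \<Rightarrow> 'v pt" where
  "point len e t = (if t = 0 then Vtx (fst e) else if t = len e then Vtx (snd e) else Inn e t)"

fun pvdist :: "('v \<times> 'v) set \<Rightarrow> ('v \<times> 'v \<Rightarrow> real) \<Rightarrow> 'v pt \<Rightarrow> 'v \<Rightarrow> real" where
  "pvdist E len (Vtx v) w = vdist E len v w"
| "pvdist E len (Inn e t) w =
     min (t + vdist E len (fst e) w) ((len e - t) + vdist E len (snd e) w)"

text \<open>Shortest-path distance between points of S: a path leaving an
interior point either stays in its edge or exits through an endpoint.\<close>
fun pdist :: "('v \<times> 'v) set \<Rightarrow> ('v \<times> 'v \<Rightarrow> real) \<Rightarrow> 'v pt \<Rightarrow> 'v pt \<Rightarrow> real" where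
  "pdist E len (Vtx v) q = pvdist E len q v"
| "pdist E len (Inn e s) q =
     (let via = min (s + pvdist E len q (fst e)) ((len e - s) + pvdist E len q (snd e))
      in case q of Inn e' t \<Rightarrow> (if e' = e then min \<bar>s - t\<bar> via else via) | Vtx _ \<Rightarrow> via)"

text \<open>Profiles: x i is the location of player i, players are 0..<n.\<close>

definition occupied :: "nat \<Rightarrow> (nat \<Rightarrow> 'v pt) \<Rightarrow> 'v pt set" where
  "occupied n x = x ` {..<n}"

definition share :: "('v \<times> 'v) set \<Rightarrow> ('v \<times> 'v \<Rightarrow> real) \<Rightarrow> nat \<Rightarrow> (nat \<Rightarrow> 'v pt) \<Rightarrow> nat \<Rightarrow> 'v pt \<Rightarrow> real" where
  "share E len n x i y =
    (let L = occupied n x;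
         m = Min ((\<lambda>l. pdist E len y l) ` L);
         C = {l \<in> L. pdist E len y l = m}
     in if x i \<in> C then 1 / (real (card C) * real (card {j \<in> {..<n}. x j = x i})) else 0)"

definition payoff :: "('v \<times> 'v) set \<Rightarrow> ('v \<times> 'v \<Rightarrow> real) \<Rightarrow> nat \<Rightarrow> (nat \<Rightarrow> 'v pt) \<Rightarrow> nat \<Rightarrow> real" where
  "payoff E len n x i = (\<Sum>e\<in>E. integral {0..len e} (\<lambda>t. share E len n x i (point len e t)))"

definition profile :: "'v set \<Rightarrow> ('v \<times> 'v) set \<Rightarrow> ('v \<times> 'v \<Rightarrow> real) \<Rightarrow> nat \<Rightarrow> (nat \<Rightarrow> 'v pt) \<Rightarrow> bool" where
  "profile V E len n x \<longleftrightarrow> (\<forall>i<n. x i \<in> Spts V E len)"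

definition nash_eq :: "'v set \<Rightarrow> ('v \<times> 'v) set \<Rightarrow> ('v \<times> 'v \<Rightarrow> real) \<Rightarrow> nat \<Rightarrow> (nat \<Rightarrow> 'v pt) \<Rightarrow> bool" where
  "nash_eq V E len n x \<longleftrightarrow> profile V E len n x \<and>
     (\<forall>i<n. \<forall>y\<in>Spts V E len. payoff E len n (x(i := y)) i \<le> payoff E len n x i)"

definition vertex_property :: "'v set \<Rightarrow> ('v \<times> 'v) set \<Rightarrow> nat \<Rightarrow> (nat \<Rightarrow> 'v pt) \<Rightarrow> bool" where
  "vertex_property V E n x \<longleftrightarrow> (\<forall>v\<in>V. deg E v \<ge> 3 \<longrightarrow> (\<exists>i<n. x i = Vtx v))"

definition half_interval :: "('v \<times> 'v) set \<Rightarrow> ('v \<times> 'v \<Rightarrow> real) \<Rightarrow> nat \<Rightarrow> (nat \<Rightarrow> 'v pt)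
    \<Rightarrow> 'v \<times> 'v \<Rightarrow> real \<Rightarrow> real \<Rightarrow> bool" where
  "half_interval E len n x e s t \<longleftrightarrow> e \<in> E \<and> 0 \<le> s \<and> s \<le> t \<and> t \<le> len e \<and>
    ( \<comment> \<open>(i): one end is a player, the other end a leaf endpoint of e\<close>
      (\<exists>i<n. point len e s = x i \<and> t = len e \<and> deg E (snd e) = 1 \<and>
          (\<forall>j<n. \<forall>u. s < u \<and> u \<le> t \<longrightarrow> point len e u \<noteq> x j))
    \<or> (\<exists>i<n. point len e t = x i \<and> s = 0 \<and> deg E (fst e) = 1 \<and>
          (\<forall>j<n. \<forall>u. s \<le> u \<and> u < t \<longrightarrow> point len e u \<noteq> x j))
    \<or> \<comment> \<open>(ii): one end a player, the other the midpoint to a neighbouring player on e\<close>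
      (\<exists>i<n. \<exists>l<n. \<exists>p q. 0 \<le> p \<and> p \<le> len e \<and> 0 \<le> q \<and> q \<le> len e \<and>
          point len e p = x i \<and> point len e q = x l \<and>
          (\<forall>j<n. \<forall>u. min p q < u \<and> u < max p q \<longrightarrow> point len e u \<noteq> x j) \<and>
          {s, t} = {p, (p + q) / 2}))"

end

theory Submission
  imports Defs
begin


lemma pdist_cont: "continuous_on UNIV (\<lambda>t. pdist E len (Inn e t) q)"
proof (cases q)
  case (Vtx v) then show ?thesis by (simp add: Let_def, intro continuous_intros)
next
  case (Inn e' w) then show ?thesis
    by (cases "e' = e") (simp_all add: Let_def, (intro continuous_intros)+)
qed

lemma share_alt:
  assumes "i < n"
  shows "share E len n x i y = (let L = occupied n x; m = Min ((\<lambda>l. pdist E len y l) ` L) in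
     if pdist E len y (x i) = m then 1 / ((\<Sum>l\<in>L. if pdist E len y l = m then 1 else 0) * real (card {j \<in> {..<n}. x j = x i})) else 0)"
proof -
  have xi: "x i \<in> occupied n x" using assms by (auto simp: occupied_def)
  have fin: "finite (occupied n x)" by (simp add: occupied_def)
  have c: "real (card {l \<in> L. P l}) = (\<Sum>l\<in>L. if P l then 1 else 0)" if "finite L" for L and P :: "'v pt \<Rightarrow> bool"
    using that by (simp add: sum.If_cases Collect_conj_eq)
  show ?thesis unfolding share_def Let_def using xi by (auto simp: c[OF fin])
qed

lemma share_meas:
  assumes "i < n" "S \<in> sets lebesgue"
  shows "(\<lambda>t. share E len n x i (Inn e t)) \<in> borel_measurable (lebesgue_on S)"
proof -
  have D[measurable]: "(\<lambda>t. pdist E len (Inn e t) q) \<in> borel_measurable (lebesgue_on S)" for q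
    by (rule continuous_imp_measurable_on_sets_lebesgue[OF continuous_on_subset[OF pdist_cont] assms(2)]) simp
  have fin: "finite (occupied n x)" by (simp add: occupied_def)
  show ?thesis unfolding share_alt[OF assms(1)] Let_def
    using fin by measurable
qed



lemma share_nonneg: "0 \<le> share E len n x i y"
  unfolding share_def Let_def by auto

lemma share_le1:
  assumes "i < n" shows "share E len n x i y \<le> 1"
proof -
  define L where "L = occupied n x"
  define m where "m = Min ((\<lambda>l. pdist E len y l) ` L)"
  define C where "C = {l \<in> L. pdist E len y l = m}"
  have finL: "finite L" by (simp add: L_def occupied_def)
  have fC: "finite C" using finL by (simp add: C_def)
  have c1: "card C \<ge> 1" if "x i \<in> C"
  proof -
    have "C \<noteq> {}" using that by auto
    then have "card C > 0" using fC by (simp add: card_gt_0_iff)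
    then show ?thesis by simp
  qed
  have c2: "card {j \<in> {..<n}. x j = x i} \<ge> 1"
  proof -
    have "i \<in> {j \<in> {..<n}. x j = x i}" using assms by simp
    then have "{j \<in> {..<n}. x j = x i} \<noteq> {}" by blast
    then have "card {j \<in> {..<n}. x j = x i} > 0" by (simp add: card_gt_0_iff)
    then show ?thesis by simp
  qed
  have "x i \<in> C \<Longrightarrow> 1 / (real (card C) * real (card {j \<in> {..<n}. x j = x i})) \<le> 1"
  proof -
    assume "x i \<in> C"
    hence "real (card C) * real (card {j \<in> {..<n}. x j = x i}) \<ge> 1"
      using c1 c2 by (metis mult_le_mono nat_mult_1 of_nat_1 of_nat_le_iff of_nat_mult)
    thus ?thesis by simp
  qed
  moreover have "share E len n x i y = (if x i \<in> C then 1 / (real (card C) * real (card {j \<in> {..<n}. x j = x i})) else 0)"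
    by (simp add: share_def Let_def L_def m_def C_def)
  ultimately show ?thesis by simp
qed

lemma share_sum:
  assumes "n > 0"
  shows "(\<Sum>i<n. share E len n x i y) = 1"
proof -
  define L where "L = occupied n x"
  define m where "m = Min ((\<lambda>l. pdist E len y l) ` L)"
  define C where "C = {l \<in> L. pdist E len y l = m}"
  define k where "k = (\<lambda>c. card {j \<in> {..<n}. x j = c})"
  have finL: "finite L" by (simp add: L_def occupied_def)
  have Lne: "L \<noteq> {}" using assms by (auto simp: L_def occupied_def)
  have fC: "finite C" using finL by (simp add: C_def)
  have Cne: "C \<noteq> {}"
  proof -
    have "m \<in> (\<lambda>l. pdist E len y l) ` L" unfolding m_def using finL Lne by (intro Min_in) auto
    then show ?thesis by (auto simp: C_def)
  qed
  have CL: "C \<subseteq> L" by (auto simp: C_def)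
  have sh: "share E len n x i y = (if x i \<in> C then 1 / (real (card C) * real (k (x i))) else 0)" for i
    unfolding share_def Let_def L_def[symmetric] m_def[symmetric] C_def[symmetric] k_def by simp
  have img: "x ` {..<n} \<subseteq> L" by (auto simp: L_def occupied_def)
  have "(\<Sum>i<n. share E len n x i y) = (\<Sum>c\<in>L. \<Sum>i\<in>{i. i \<in> {..<n} \<and> x i = c}. share E len n x i y)"
    using sum.group[OF finite_lessThan finL img, of "\<lambda>i. share E len n x i y"] by simp
  also have "\<dots> = (\<Sum>c\<in>L. if c \<in> C then 1 / real (card C) else 0)"
  proof (rule sum.cong[OF refl])
    fix c assume cL: "c \<in> L"
    have kpos: "k c > 0"
    proof -
      obtain j where "j < n" "x j = c" using cL by (auto simp: L_def occupied_def)
      then have "j \<in> {j \<in> {..<n}. x j = c}" by simp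
      then have "{j \<in> {..<n}. x j = c} \<noteq> {}" by blast
      then show ?thesis unfolding k_def by (simp add: card_gt_0_iff)
    qed
    have "(\<Sum>i\<in>{i. i \<in> {..<n} \<and> x i = c}. share E len n x i y)
        = (\<Sum>i\<in>{i. i \<in> {..<n} \<and> x i = c}. (if c \<in> C then 1 / (real (card C) * real (k c)) else 0))"
      by (rule sum.cong) (auto simp: sh)
    also have "\<dots> = real (k c) * (if c \<in> C then 1 / (real (card C) * real (k c)) else 0)"
      by (simp add: k_def)
    also have "\<dots> = (if c \<in> C then 1 / real (card C) else 0)" using kpos by simp
    finally show "(\<Sum>i\<in>{i. i \<in> {..<n} \<and> x i = c}. share E len n x i y) = (if c \<in> C then 1 / real (card C) else 0)" .
  qed
  also have "\<dots> = (\<Sum>c\<in>C. 1 / real (card C))"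
    using sum.If_cases[OF finL, of "\<lambda>c. c \<in> C" "\<lambda>_. 1 / real (card C)" "\<lambda>_. 0"] CL
    by (simp add: Int_absorb1[OF CL])
  also have "\<dots> = 1" using Cne fC by simp
  finally show ?thesis .
qed

lemma share_int:
  assumes "i < n"
  shows "(\<lambda>t. share E len n x i (point len e t)) integrable_on {0..len e}"
proof -
  have "(\<lambda>t. share E len n x i (Inn e t)) integrable_on {0..len e}"
  proof (rule measurable_bounded_by_integrable_imp_integrable[where g = "\<lambda>_. 1"])
    show "(\<lambda>t. share E len n x i (Inn e t)) \<in> borel_measurable (lebesgue_on {0..len e})"
      by (rule share_meas[OF assms]) simp
    show "(\<lambda>_. 1::real) integrable_on {0..len e}" by (rule integrable_const_ivl)
    show "norm (share E len n x i (Inn e t)) \<le> 1" for t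
      using share_nonneg[of E len n x i] share_le1[OF assms] by simp
    show "{0..len e} \<in> sets lebesgue" by (metis lmeasurable_cbox cbox_interval fmeasurableD)
  qed
  moreover have "finite {0, len e}" by simp
  moreover have "\<And>t. t \<in> {0..len e} - {0, len e} \<Longrightarrow> share E len n x i (point len e t) = share E len n x i (Inn e t)"
    by (simp add: point_def)
  ultimately show ?thesis
    using integrable_spike_finite[of "{0, len e}" "{0..len e}" "\<lambda>t. share E len n x i (point len e t)" "\<lambda>t. share E len n x i (Inn e t)"]
    by fast
qed

lemma total_payoff:
  assumes "finite E" "n > 0" "\<forall>f\<in>E. len f > 0"
  shows "(\<Sum>i<n. payoff E len n x i) = (\<Sum>f\<in>E. len f)"
proof -
  have "(\<Sum>i<n. payoff E len n x i) = (\<Sum>f\<in>E. \<Sum>i<n. integral {0..len f} (\<lambda>t. share E len n x i (point len f t)))"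
    unfolding payoff_def by (rule sum.swap)
  also have "\<dots> = (\<Sum>f\<in>E. len f)"
  proof (rule sum.cong[OF refl])
    fix f assume fE: "f \<in> E"
    have "(\<Sum>i<n. integral {0..len f} (\<lambda>t. share E len n x i (point len f t)))
        = integral {0..len f} (\<lambda>t. \<Sum>i<n. share E len n x i (point len f t))"
      by (rule integral_sum[symmetric]) (simp_all add: share_int)
    also have "\<dots> = integral {0..len f} (\<lambda>t. 1)"
      by (simp only: share_sum[OF assms(2)])
    also have "\<dots> = len f" using assms(3) fE by (simp add: less_imp_le)
    finally show "(\<Sum>i<n. integral {0..len f} (\<lambda>t. share E len n x i (point len f t))) = len f" .
  qed
  finally show ?thesis .
qed



lemma elen_pos:
  assumes "adjacent E u w" "\<forall>f\<in>E. len f > 0"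
  shows "elen E len u w > 0"
  using assms by (auto simp: adjacent_def elen_def)

lemma walk_len_nonneg:
  assumes "is_walk E xs" "\<forall>f\<in>E. len f > 0"
  shows "0 \<le> walk_len E len xs"
  unfolding walk_len_def
proof (rule sum_nonneg)
  fix k assume "k \<in> {..<length xs - 1}"
  then have "Suc k < length xs" by auto
  then have "adjacent E (xs ! k) (xs ! Suc k)" using assms(1) by (simp add: is_walk_def)
  then show "0 \<le> elen E len (xs ! k) (xs ! Suc k)" using elen_pos[OF _ assms(2)] less_imp_le by blast
qed

lemma walks_ne:
  assumes "network V E len" "u \<in> V" "w \<in> V"
  shows "{walk_len E len xs | xs. is_walk E xs \<and> hd xs = u \<and> last xs = w} \<noteq> {}"
proof -
  obtain xs where "is_walk E xs \<and> hd xs = u \<and> last xs = w"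
    using assms unfolding network_def connected_graph_def by blast
  then show ?thesis by blast
qed

lemma vdist_nonneg:
  assumes "network V E len" "u \<in> V" "w \<in> V"
  shows "0 \<le> vdist E len u w"
  unfolding vdist_def
proof (rule cInf_greatest[OF walks_ne[OF assms]])
  fix r assume "r \<in> {walk_len E len xs | xs. is_walk E xs \<and> hd xs = u \<and> last xs = w}"
  then show "0 \<le> r" using walk_len_nonneg assms(1) by (auto simp: network_def)
qed

lemma leaf_dist:
  assumes net: "network V E len" and eE: "e \<in> E"
    and star: "{f \<in> E. fst f = w \<or> snd f = w} = {e}"
    and v: "v \<in> V" "w \<in> V" "v \<noteq> w"
  shows "len e \<le> vdist E len v w"
  unfolding vdist_def
proof (rule cInf_greatest[OF walks_ne[OF net v(1,2)]])
  fix r assume "r \<in> {walk_len E len xs | xs. is_walk E xs \<and> hd xs = v \<and> last xs = w}"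
  then obtain xs where r: "r = walk_len E len xs" and W: "is_walk E xs" "hd xs = v" "last xs = w" by blast
  have pos: "\<forall>f\<in>E. len f > 0" using net by (simp add: network_def)
  have ne: "xs \<noteq> []" using W(1) by (simp add: is_walk_def)
  have l2: "length xs \<ge> 2"
  proof (rule ccontr)
    assume "\<not> length xs \<ge> 2"
    then have "length xs = 1" using ne by (cases xs) (auto simp: not_le)
    then obtain a where "xs = [a]" by (cases xs) auto
    then show False using W v by simp
  qed
  define k where "k = length xs - 2"
  have k1: "Suc k < length xs" using l2 by (simp add: k_def)
  have k2: "xs ! Suc k = w" using W(3) ne l2 by (simp add: k_def last_conv_nth Suc_diff_Suc numeral_2_eq_2)
  have adj: "adjacent E (xs ! k) w" using W(1) k1 k2 by (auto simp: is_walk_def)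
  have el: "elen E len (xs ! k) w = len e"
  proof (cases "(xs ! k, w) \<in> E")
    case True
    then have "(xs ! k, w) \<in> {f \<in> E. fst f = w \<or> snd f = w}" by simp
    then have "(xs ! k, w) = e" using star by blast
    then show ?thesis using True by (simp add: elen_def)
  next
    case False
    then have "(w, xs ! k) \<in> E" using adj by (simp add: adjacent_def)
    then have "(w, xs ! k) \<in> {f \<in> E. fst f = w \<or> snd f = w}" by simp
    then have "(w, xs ! k) = e" using star by blast
    then show ?thesis using False by (simp add: elen_def)
  qed
  have "len e = elen E len (xs ! k) (xs ! Suc k)" using el k2 by simp
  also have "\<dots> \<le> (\<Sum>j<length xs - 1. elen E len (xs ! j) (xs ! Suc j))"
  proof (rule member_le_sum)
    show "k \<in> {..<length xs - 1}" using k1 by simp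
    show "finite {..<length xs - 1}" by simp
    fix j assume "j \<in> {..<length xs - 1} - {k}"
    then have "Suc j < length xs" by auto
    then have "adjacent E (xs ! j) (xs ! Suc j)" using W(1) by (simp add: is_walk_def)
    then show "0 \<le> elen E len (xs ! j) (xs ! Suc j)" using elen_pos[OF _ pos] less_imp_le by blast
  qed
  finally show "len e \<le> r" by (simp add: r walk_len_def)
qed

lemma Spts_cases:
  assumes "q \<in> Spts V E len"
  obtains v where "v \<in> V" "q = Vtx v"
  | e' w where "e' \<in> E" "0 < w" "w < len e'" "q = Inn e' w"
  using assms unfolding Spts_def by blast

lemma pvdist_nonneg:
  assumes net: "network V E len" and q: "q \<in> Spts V E len" and w: "w \<in> V"
  shows "0 \<le> pvdist E len q w"
  using q
proof (cases rule: Spts_cases)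
  case (1 v) then show ?thesis using vdist_nonneg[OF net _ w] by simp
next
  case (2 e' t)
  have "fst e' \<in> V" "snd e' \<in> V" using net 2(1) by (auto simp: network_def)
  then show ?thesis using 2 vdist_nonneg[OF net _ w] by simp
qed

lemma pdist_lb:
  assumes "r \<le> u + pvdist E len q (fst e)" "r \<le> len e - u + pvdist E len q (snd e)"
    "\<And>w. q = Inn e w \<Longrightarrow> r \<le> \<bar>u - w\<bar>"
  shows "r \<le> pdist E len (Inn e u) q"
  using assms by (cases q) (auto simp: Let_def)

lemma point_inner: "0 < u \<Longrightarrow> u < len e \<Longrightarrow> point len e u = Inn e u"
  by (simp add: point_def)

lemma point_0: "point len e 0 = Vtx (fst e)" by (simp add: point_def)
lemma point_len: "len e \<noteq> 0 \<Longrightarrow> point len e (len e) = Vtx (snd e)" by (simp add: point_def)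



lemma exists_low_payoff:
  assumes net: "network V E len" and n: "n > 0"
  obtains j where "j < n" "payoff E len n x j \<le> (\<Sum>f\<in>E. len f) / real n"
proof -
  have fE: "finite E" using net unfolding network_def by (meson finite_SigmaI finite_subset)
  have pos: "\<forall>f\<in>E. len f > 0" using net by (simp add: network_def)
  show ?thesis
  proof (rule ccontr)
    assume "\<not> ?thesis"
    then have "\<forall>j\<in>{..<n}. (\<Sum>f\<in>E. len f) / real n < payoff E len n x j" using that by force
    then have "(\<Sum>j<n. (\<Sum>f\<in>E. len f) / real n) < (\<Sum>j<n. payoff E len n x j)"
      using n by (intro sum_strict_mono) auto
    also have "\<dots> = (\<Sum>f\<in>E. len f)" by (rule total_payoff[OF fE n pos])
    finally show False using n by simp
  qed
qed

lemma half_aux: "(q::real) < b - a \<Longrightarrow> q < b - a - (b - a - q) / 2" by (simp add: field_simps)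

lemma deviation:
  assumes net: "network V E len" and ne: "nash_eq V E len n x" and n: "n > 0"
    and eE: "e \<in> E" and ab: "0 \<le> \<alpha>" "\<alpha> < \<beta>" "\<beta> \<le> len e" and a: "a = \<alpha> \<or> a = \<beta>"
    and empty: "\<forall>k<n. \<forall>u. \<alpha> < u \<and> u < \<beta> \<longrightarrow> point len e u \<noteq> x k"
    and bound: "\<forall>k<n. \<forall>u. \<alpha> < u \<and> u < \<beta> \<longrightarrow> \<bar>u - a\<bar> \<le> pdist E len (Inn e u) (x k)"
  shows "\<beta> - \<alpha> \<le> (\<Sum>f\<in>E. len f) / real n"
proof (rule ccontr)
  define \<Lambda> where "\<Lambda> = (\<Sum>f\<in>E. len f)"
  assume "\<not> ?thesis"
  then have gt: "\<beta> - \<alpha> > \<Lambda> / real n" by (simp add: \<Lambda>_def)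
  have fE: "finite E" using net unfolding network_def by (meson finite_SigmaI finite_subset)
  have pos: "\<forall>f\<in>E. len f > 0" using net by (simp add: network_def)
  have L0: "\<Lambda> \<ge> 0" unfolding \<Lambda>_def using pos by (simp add: less_imp_le sum_nonneg)
  obtain j where j: "j < n" "payoff E len n x j \<le> \<Lambda> / real n"
    using exists_low_payoff[OF net n] unfolding \<Lambda>_def by blast
  define \<epsilon> where "\<epsilon> = (\<beta> - \<alpha> - \<Lambda> / real n) / 2"
  have Ln: "\<Lambda> / real n \<ge> 0" using L0 by simp
  have ep: "\<epsilon> > 0" "\<epsilon> < \<beta> - \<alpha>" using gt Ln ab unfolding \<epsilon>_def by auto
  define c where "c = (if a = \<alpha> then \<alpha> + \<epsilon> else \<beta> - \<epsilon>)"
  define lo where "lo = (if a = \<alpha> then c else \<alpha>)"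
  define hi where "hi = (if a = \<alpha> then \<beta> else c)"
  have c: "\<alpha> < c" "c < \<beta>" using ep by (auto simp: c_def)
  have lohi: "\<alpha> \<le> lo" "lo < hi" "hi \<le> \<beta>" "hi - lo = \<beta> - \<alpha> - \<epsilon>"
    using ep ab by (auto simp: lo_def hi_def c_def)
  have closer: "\<bar>u - c\<bar> < \<bar>u - a\<bar>" if "lo < u" "u < hi" for u
    using that a ab ep by (auto simp: lo_def hi_def c_def)
  define z where "z = Inn e c"
  have zS: "z \<in> Spts V E len"
  proof -
    have "0 < c" "c < len e" using c ab by auto
    then show ?thesis using eE unfolding z_def Spts_def by blast
  qed
  define x' where "x' = x(j := z)"
  have dev: "payoff E len n x' j \<le> payoff E len n x j"
    using ne j(1) zS unfolding nash_eq_def x'_def by blast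
  have zfree: "x k \<noteq> z" if "k < n" for k
    using empty that c ab point_inner[of c len e] by (auto simp: z_def)
  have share1: "share E len n x' j (point len e u) = 1" if u: "lo < u" "u < hi" for u
  proof -
    have u': "\<alpha> < u" "u < \<beta>" using u lohi by auto
    have pt: "point len e u = Inn e u" using u' ab by (intro point_inner) auto
    define D where "D = (\<lambda>l. pdist E len (Inn e u) l)"
    define L where "L = occupied n x'"
    have finL: "finite L" by (simp add: L_def occupied_def)
    have zL: "z \<in> L" using j(1) by (auto simp: L_def occupied_def x'_def)
    have Dz: "D z \<le> \<bar>u - c\<bar>" by (simp add: D_def z_def Let_def)
    have Dl: "D z < D l" if lL: "l \<in> L" and lz: "l \<noteq> z" for l
    proof -
      obtain k where k: "k < n" "l = x' k" using lL by (auto simp: L_def occupied_def)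
      have "k \<noteq> j" using k lz by (auto simp: x'_def)
      then have "l = x k" using k by (simp add: x'_def)
      then have "\<bar>u - a\<bar> \<le> D l" using bound k(1) u' by (simp add: D_def)
      then show ?thesis using Dz closer[OF u] by linarith
    qed
    have m: "Min (D ` L) = D z"
      using finL zL Dl by (intro Min_eqI) (auto intro: less_imp_le)
    have C: "{l \<in> L. D l = Min (D ` L)} = {z}"
      using m zL Dl by force
    have K: "{k \<in> {..<n}. x' k = x' j} = {j}"
      using j(1) zfree by (auto simp: x'_def)
    have "share E len n x' j (Inn e u) = 1"
      unfolding share_def Let_def L_def[symmetric] D_def[symmetric] C K
      by (simp add: x'_def)
    then show ?thesis using pt by simp
  qed
  define h where "h = (\<lambda>t. share E len n x' j (point len e t))"
  have hint: "h integrable_on {0..len e}" unfolding h_def by (rule share_int[OF j(1)])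
  have hnn: "\<forall>t. 0 \<le> h t" by (simp add: h_def share_nonneg)
  have sub: "{lo..hi} \<subseteq> {0..len e}" using lohi ab by auto
  have "((\<lambda>_. 1::real) has_integral (hi - lo)) {lo..hi}"
    using has_integral_const_real[of "1::real" lo hi] lohi by simp
  then have "(h has_integral (hi - lo)) {lo..hi}"
    by (rule has_integral_spike_finite[where S = "{lo, hi}", rotated 2]) (auto simp: share1 h_def)
  then have "hi - lo = integral {lo..hi} h" by (simp add: integral_unique)
  also have "\<dots> \<le> integral {0..len e} h"
    using sub hint hnn by (intro integral_subset_le integrable_on_subinterval[OF hint]) auto
  also have "\<dots> \<le> (\<Sum>f\<in>E. integral {0..len f} (\<lambda>t. share E len n x' j (point len f t)))"
    unfolding h_def
  proof (rule member_le_sum[OF eE _ fE])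
    fix f assume "f \<in> E - {e}"
    show "0 \<le> integral {0..len f} (\<lambda>t. share E len n x' j (point len f t))"
      by (rule integral_nonneg[OF share_int[OF j(1)]]) (simp add: share_nonneg)
  qed
  also have "\<dots> = payoff E len n x' j" by (simp add: payoff_def)
  also have "\<dots> \<le> \<Lambda> / real n" using dev j(2) by linarith
  finally have "hi - lo \<le> \<Lambda> / real n" .
  moreover have "\<Lambda> / real n < \<beta> - \<alpha> - (\<beta> - \<alpha> - \<Lambda> / real n) / 2"
    using half_aux[OF gt] .
  ultimately show False using lohi(4) unfolding \<epsilon>_def by linarith
qed



lemma net_facts:
  assumes "network V E len" "e \<in> E"
  shows "fst e \<in> V" "snd e \<in> V" "fst e \<noteq> snd e" "len e > 0" "finite E"
  using assms unfolding network_def by (auto intro: finite_subset)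

lemma star_of_leaf:
  assumes "network V E len" "e \<in> E" "deg E w = 1" "w = fst e \<or> w = snd e"
  shows "{f \<in> E. fst f = w \<or> snd f = w} = {e}"
proof -
  have "card {f \<in> E. fst f = w \<or> snd f = w} = 1" using assms(3) by (simp add: deg_def)
  then obtain y where y: "{f \<in> E. fst f = w \<or> snd f = w} = {y}" by (rule card_1_singletonE)
  have "e \<in> {f \<in> E. fst f = w \<or> snd f = w}" using assms(2,4) by auto
  then show ?thesis using y by auto
qed

lemma P_snd_leaf:
  assumes net: "network V E len" and eE: "e \<in> E"
    and star: "{f \<in> E. fst f = snd e \<or> snd f = snd e} = {e}"
    and q: "q \<in> Spts V E len" "q \<noteq> Vtx (snd e)" and w: "\<And>w. q = Inn e w \<Longrightarrow> w \<le> s" and s: "0 \<le> s"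
  shows "len e - s \<le> pvdist E len q (snd e)"
  using q(1)
proof (cases rule: Spts_cases)
  case (1 v)
  then have "len e \<le> vdist E len v (snd e)"
    using q(2) by (intro leaf_dist[OF net eE star]) (auto simp: net_facts[OF net eE])
  then show ?thesis using 1 s by simp
next
  case (2 e' w)
  show ?thesis
  proof (cases "e' = e")
    case True
    have ws: "w \<le> s" using w 2 True by simp
    have a: "len e \<le> vdist E len (fst e) (snd e)"
      by (rule leaf_dist[OF net eE star]) (auto simp: net_facts[OF net eE])
    have b: "0 \<le> vdist E len (snd e) (snd e)"
      by (rule vdist_nonneg[OF net]) (auto simp: net_facts[OF net eE])
    show ?thesis using 2 True a b ws by auto
  next
    case False
    have ne: "fst e' \<noteq> snd e" "snd e' \<noteq> snd e" using False star 2(1) by blast+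
    have a: "len e \<le> vdist E len (fst e') (snd e)"
      using ne by (intro leaf_dist[OF net eE star]) (auto simp: net_facts[OF net eE] net_facts[OF net 2(1)])
    have b: "len e \<le> vdist E len (snd e') (snd e)"
      using ne by (intro leaf_dist[OF net eE star]) (auto simp: net_facts[OF net eE] net_facts[OF net 2(1)])
    show ?thesis using 2 a b s by auto
  qed
qed

lemma P_fst_leaf:
  assumes net: "network V E len" and eE: "e \<in> E"
    and star: "{f \<in> E. fst f = fst e \<or> snd f = fst e} = {e}"
    and q: "q \<in> Spts V E len" "q \<noteq> Vtx (fst e)" and w: "\<And>w. q = Inn e w \<Longrightarrow> t \<le> w" and t: "t \<le> len e"
  shows "t \<le> pvdist E len q (fst e)"
  using q(1)
proof (cases rule: Spts_cases)
  case (1 v)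
  then have "len e \<le> vdist E len v (fst e)"
    using q(2) by (intro leaf_dist[OF net eE star]) (auto simp: net_facts[OF net eE])
  then show ?thesis using 1 t by simp
next
  case (2 e' w)
  show ?thesis
  proof (cases "e' = e")
    case True
    have ws: "t \<le> w" using w 2 True by simp
    have a: "len e \<le> vdist E len (snd e) (fst e)"
      using net_facts(3)[OF net eE] by (intro leaf_dist[OF net eE star]) (auto simp: net_facts[OF net eE] eq_commute)
    have b: "0 \<le> vdist E len (fst e) (fst e)"
      by (rule vdist_nonneg[OF net]) (auto simp: net_facts[OF net eE])
    show ?thesis using 2 True a b ws t by auto
  next
    case False
    have ne: "fst e' \<noteq> fst e" "snd e' \<noteq> fst e" using False star 2(1) by blast+
    have a: "len e \<le> vdist E len (fst e') (fst e)"
      using ne by (intro leaf_dist[OF net eE star]) (auto simp: net_facts[OF net eE] net_facts[OF net 2(1)])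
    have b: "len e \<le> vdist E len (snd e') (fst e)"
      using ne by (intro leaf_dist[OF net eE star]) (auto simp: net_facts[OF net eE] net_facts[OF net 2(1)])
    show ?thesis using 2 a b t by auto
  qed
qed

lemma Inn_point:
  assumes "q \<in> Spts V E len" "q = Inn e w"
  shows "point len e w = q" "0 < w" "w < len e"
  using assms unfolding Spts_def point_def by auto



theorem mainTheorem13:
  fixes V :: "'v set" and E :: "('v \<times> 'v) set" and len :: "'v \<times> 'v \<Rightarrow> real"
    and n :: nat and x :: "nat \<Rightarrow> 'v pt" and e :: "'v \<times> 'v" and s t :: real
  assumes "network V E len"
    and "nash_eq V E len n x"
    and "vertex_property V E n x"
    and "half_interval E len n x e s t"
  shows "t - s \<le> (\<Sum>f\<in>E. len f) / real n"
proof -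
  note net = assms(1) and ne = assms(2)
  have hi: "e \<in> E" "0 \<le> s" "s \<le> t" "t \<le> len e" using assms(4) by (auto simp: half_interval_def)
  note eE = hi(1)
  have pos: "\<forall>f\<in>E. len f > 0" using net by (simp add: network_def)
  have L0: "0 \<le> (\<Sum>f\<in>E. len f) / real n" using pos by (simp add: less_imp_le sum_nonneg)
  have prof: "\<And>k. k < n \<Longrightarrow> x k \<in> Spts V E len" using ne by (simp add: nash_eq_def profile_def)
  have fV: "fst e \<in> V" "snd e \<in> V" and le0: "len e > 0" using net_facts[OF net eE] by auto
  show ?thesis
  proof (cases "s = t")
    case True then show ?thesis using L0 by simp
  next
    case False
    then have st: "s < t" using hi by simp
    consider (A) "\<exists>i<n. point len e s = x i \<and> t = len e \<and> deg E (snd e) = 1 \<and>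
          (\<forall>j<n. \<forall>u. s < u \<and> u \<le> t \<longrightarrow> point len e u \<noteq> x j)"
      | (B) "\<exists>i<n. point len e t = x i \<and> s = 0 \<and> deg E (fst e) = 1 \<and>
          (\<forall>j<n. \<forall>u. s \<le> u \<and> u < t \<longrightarrow> point len e u \<noteq> x j)"
      | (C) "\<exists>i<n. \<exists>l<n. \<exists>p q. 0 \<le> p \<and> p \<le> len e \<and> 0 \<le> q \<and> q \<le> len e \<and>
          point len e p = x i \<and> point len e q = x l \<and>
          (\<forall>j<n. \<forall>u. min p q < u \<and> u < max p q \<longrightarrow> point len e u \<noteq> x j) \<and>
          {s, t} = {p, (p + q) / 2}"
      using assms(4) unfolding half_interval_def by blast
    then show ?thesis
    proof cases
      case A
      then obtain i where i: "i < n" and tl: "t = len e" and dg: "deg E (snd e) = 1"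
        and emp: "\<forall>j<n. \<forall>u. s < u \<and> u \<le> t \<longrightarrow> point len e u \<noteq> x j" by blast
      have n: "n > 0" using i by simp
      have star: "{f \<in> E. fst f = snd e \<or> snd f = snd e} = {e}"
        by (rule star_of_leaf[OF net eE dg]) simp
      show ?thesis
      proof (rule deviation[OF net ne n eE hi(2) st hi(4), where a = s])
        show "\<forall>k<n. \<forall>u. s < u \<and> u < t \<longrightarrow> point len e u \<noteq> x k" using emp by auto
        show "\<forall>k<n. \<forall>u. s < u \<and> u < t \<longrightarrow> \<bar>u - s\<bar> \<le> pdist E len (Inn e u) (x k)"
        proof (intro allI impI)
          fix k u assume k: "k < n" and u: "s < u \<and> u < t"
          have xk: "x k \<in> Spts V E len" using prof k .
          have wle: "w \<le> s" if "x k = Inn e w" for w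
          proof (rule ccontr)
            assume "\<not> w \<le> s"
            moreover have "point len e w = x k" "w < len e" using Inn_point[OF xk that] by auto
            ultimately show False using emp k tl by force
          qed
          have nv: "x k \<noteq> Vtx (snd e)"
            using emp k st tl point_len[of len e] le0 by force
          have P1: "0 \<le> pvdist E len (x k) (fst e)" by (rule pvdist_nonneg[OF net xk fV(1)])
          have P2: "len e - s \<le> pvdist E len (x k) (snd e)"
            by (rule P_snd_leaf[OF net eE star xk nv wle hi(2)])
          show "\<bar>u - s\<bar> \<le> pdist E len (Inn e u) (x k)"
          proof (rule pdist_lb)
            show "\<bar>u - s\<bar> \<le> u + pvdist E len (x k) (fst e)" using P1 u hi by auto
            show "\<bar>u - s\<bar> \<le> len e - u + pvdist E len (x k) (snd e)" using P2 u hi tl by auto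
            show "\<bar>u - s\<bar> \<le> \<bar>u - w\<bar>" if "x k = Inn e w" for w using wle[OF that] u by auto
          qed
        qed
      qed simp
    next
      case B
      then obtain i where i: "i < n" and s0: "s = 0" and dg: "deg E (fst e) = 1"
        and emp: "\<forall>j<n. \<forall>u. s \<le> u \<and> u < t \<longrightarrow> point len e u \<noteq> x j" by blast
      have n: "n > 0" using i by simp
      have star: "{f \<in> E. fst f = fst e \<or> snd f = fst e} = {e}"
        by (rule star_of_leaf[OF net eE dg]) simp
      show ?thesis
      proof (rule deviation[OF net ne n eE hi(2) st hi(4), where a = t])
        show "\<forall>k<n. \<forall>u. s < u \<and> u < t \<longrightarrow> point len e u \<noteq> x k" using emp by auto
        show "\<forall>k<n. \<forall>u. s < u \<and> u < t \<longrightarrow> \<bar>u - t\<bar> \<le> pdist E len (Inn e u) (x k)"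
        proof (intro allI impI)
          fix k u assume k: "k < n" and u: "s < u \<and> u < t"
          have xk: "x k \<in> Spts V E len" using prof k .
          have wge: "t \<le> w" if "x k = Inn e w" for w
          proof (rule ccontr)
            assume "\<not> t \<le> w"
            moreover have "point len e w = x k" "0 < w" using Inn_point[OF xk that] by auto
            ultimately show False using emp k s0 by force
          qed
          have nv: "x k \<noteq> Vtx (fst e)"
            using emp k st s0 point_0[of len e] by force
          have P2: "0 \<le> pvdist E len (x k) (snd e)" by (rule pvdist_nonneg[OF net xk fV(2)])
          have P1: "t \<le> pvdist E len (x k) (fst e)"
            by (rule P_fst_leaf[OF net eE star xk nv wge hi(4)])
          show "\<bar>u - t\<bar> \<le> pdist E len (Inn e u) (x k)"
          proof (rule pdist_lb)
            show "\<bar>u - t\<bar> \<le> u + pvdist E len (x k) (fst e)" using P1 u hi by auto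
            show "\<bar>u - t\<bar> \<le> len e - u + pvdist E len (x k) (snd e)" using P2 u hi by auto
            show "\<bar>u - t\<bar> \<le> \<bar>u - w\<bar>" if "x k = Inn e w" for w using wge[OF that] u by auto
          qed
        qed
      qed simp
    next
      case C
      then obtain i l p q where il: "i < n" "l < n" and pq: "0 \<le> p" "p \<le> len e" "0 \<le> q" "q \<le> len e"
        and emp: "\<forall>j<n. \<forall>u. min p q < u \<and> u < max p q \<longrightarrow> point len e u \<noteq> x j"
        and set: "{s, t} = {p, (p + q) / 2}" by blast
      have n: "n > 0" using il by simp
      have notbetween: "\<not> (min p q < w \<and> w < max p q)" if "k < n" "x k = Inn e w" for k w
        using emp that Inn_point[OF prof[OF that(1)] that(2)] by force
      have P0: "0 \<le> pvdist E len (x k) (fst e)" "0 \<le> pvdist E len (x k) (snd e)" if "k < n" for k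
        using pvdist_nonneg[OF net prof[OF that] fV(1)] pvdist_nonneg[OF net prof[OF that] fV(2)] by auto
      show ?thesis
      proof (cases "p < q")
        case True
        have ss: "s = p" "t = (p + q) / 2" using set st True by (auto simp: doubleton_eq_iff)
        show ?thesis
        proof (rule deviation[OF net ne n eE hi(2) st hi(4), where a = s])
          show "\<forall>k<n. \<forall>u. s < u \<and> u < t \<longrightarrow> point len e u \<noteq> x k" using emp ss True by auto
          show "\<forall>k<n. \<forall>u. s < u \<and> u < t \<longrightarrow> \<bar>u - s\<bar> \<le> pdist E len (Inn e u) (x k)"
          proof (intro allI impI)
            fix k u assume k: "k < n" and u: "s < u \<and> u < t"
            show "\<bar>u - s\<bar> \<le> pdist E len (Inn e u) (x k)"
            proof (rule pdist_lb)
              show "\<bar>u - s\<bar> \<le> u + pvdist E len (x k) (fst e)" using P0[OF k] u ss pq by auto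
              show "\<bar>u - s\<bar> \<le> len e - u + pvdist E len (x k) (snd e)" using P0[OF k] u ss pq by auto
              show "\<bar>u - s\<bar> \<le> \<bar>u - w\<bar>" if "x k = Inn e w" for w
                using notbetween[OF k that] u ss True by auto
            qed
          qed
        qed simp
      next
        case False
        then have qp: "q < p" using set st by (cases "p = q") auto
        have ss: "s = (p + q) / 2" "t = p" using set st qp by (auto simp: doubleton_eq_iff)
        show ?thesis
        proof (rule deviation[OF net ne n eE hi(2) st hi(4), where a = t])
          show "\<forall>k<n. \<forall>u. s < u \<and> u < t \<longrightarrow> point len e u \<noteq> x k" using emp ss qp by auto
          show "\<forall>k<n. \<forall>u. s < u \<and> u < t \<longrightarrow> \<bar>u - t\<bar> \<le> pdist E len (Inn e u) (x k)"
          proof (intro allI impI)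
            fix k u assume k: "k < n" and u: "s < u \<and> u < t"
            show "\<bar>u - t\<bar> \<le> pdist E len (Inn e u) (x k)"
            proof (rule pdist_lb)
              show "\<bar>u - t\<bar> \<le> u + pvdist E len (x k) (fst e)" using P0[OF k] u ss pq by auto
              show "\<bar>u - t\<bar> \<le> len e - u + pvdist E len (x k) (snd e)" using P0[OF k] u ss pq by auto
              show "\<bar>u - t\<bar> \<le> \<bar>u - w\<bar>" if "x k = Inn e w" for w
                using notbetween[OF k that] u ss qp by auto
            qed
          qed
        qed simp
      qed
    qed
  qed
qed

end
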